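(* Let $\mathcal{L}\subseteq\mathcal{L}_c$ be a class of latency functions and consider a parallel-link network with $n=2$ links, unit demand and $\ell_1,\ell_2\in\mathcal{L}$. Let $x^*$ be an optimal flow, let $t\in\mathcal{T}(\infty)$ and suppose $x_1(t)>0$, $x_2(t)>0$. If there is $i\in\{1,2\}$ with $x_i(t)>x^*_i$ and $x_i(t)\ge\frac12$, then $$C(x(t))\le\frac{1}{1-\mu_2(\mathcal{L})}\,C(x^* ).$$
   Context: $\mathcal{L}_c$: strictly increasing, convex, continuously differentiable functions $\mathbb{R}_+\to\mathbb{R}_+$. Flows $x\in\mathbb{R}^2_+$ with $x_1+x_2=1$; $C(x)=\sum_i\ell_i(x_i)x_i$; $x^*$ minimizes $C$ over flows. For tolls $t$, $x(t)$ is the unique Wardrop equilibrium for $t$ (for all $i,j$ with $x_i>0$: $\ell_i(x_i)+t_i\le\ell_j(x_j)+t_j$); $\Pi_i(t)=t_ix_i(t)$; $\mathcal{T}(\infty)$ is the set of $t\in\mathbb{R}^2_+$ with $\Pi_i(t_i,t_{-i})\ge\Pi_i(t'_i,t_{-i})$ for all $i$ and all $t'_i\ge0$ (flow recomputed). For $\ell\in\mathcal{L}$ define $\mu_2(\ell)=\sup_{x\ge\frac12,\ 0\le x^*\le x}\frac{(\ell(x)-\ell(x^* ))(x^*+1-2x)}{\ell(x)}$, and $\mu_2(\mathcal{L})=\sup_{\ell\in\mathcal{L}}\mu_2(\ell)$ (which lies in $[0,1]$). *)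

theory Defs
  imports "HOL-Analysis.Analysis"
begin

definition latency_c :: "(real \<Rightarrow> real) \<Rightarrow> bool" where
  "latency_c l \<longleftrightarrow>
     (\<forall>x\<ge>0. l x \<ge> 0) \<and>
     strict_mono_on {0..} l \<and>
     convex_on {0..} l \<and>
     (\<exists>l'. (\<forall>x\<ge>0. (l has_real_derivative l' x) (at x within {0..})) \<and>
           continuous_on {0..} l')"

definition is_flow :: "real \<times> real \<Rightarrow> bool" where
  "is_flow x \<longleftrightarrow> fst x \<ge> 0 \<and> snd x \<ge> 0 \<and> fst x + snd x = 1"

definition cost :: "(real \<Rightarrow> real) \<Rightarrow> (real \<Rightarrow> real) \<Rightarrow> real \<times> real \<Rightarrow> real" where
  "cost l1 l2 x = l1 (fst x) * fst x + l2 (snd x) * snd x"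

definition optimal_flow :: "(real \<Rightarrow> real) \<Rightarrow> (real \<Rightarrow> real) \<Rightarrow> real \<times> real \<Rightarrow> bool" where
  "optimal_flow l1 l2 x \<longleftrightarrow> is_flow x \<and> (\<forall>y. is_flow y \<longrightarrow> cost l1 l2 x \<le> cost l1 l2 y)"

text \<open>Wardrop equilibrium for tolls t: for all i,j with x_i > 0,
  l_i(x_i)+t_i <= l_j(x_j)+t_j (the cases i = j are trivial).\<close>
definition wardrop :: "(real \<Rightarrow> real) \<Rightarrow> (real \<Rightarrow> real) \<Rightarrow> real \<times> real \<Rightarrow> real \<times> real \<Rightarrow> bool" where
  "wardrop l1 l2 t x \<longleftrightarrow> is_flow x \<and>
     (fst x > 0 \<longrightarrow> l1 (fst x) + fst t \<le> l2 (snd x) + snd t) \<and>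
     (snd x > 0 \<longrightarrow> l2 (snd x) + snd t \<le> l1 (fst x) + fst t)"

text \<open>x(t): the (unique) Wardrop equilibrium for tolls t.\<close>
definition eq_flow :: "(real \<Rightarrow> real) \<Rightarrow> (real \<Rightarrow> real) \<Rightarrow> real \<times> real \<Rightarrow> real \<times> real" where
  "eq_flow l1 l2 t = (THE x. wardrop l1 l2 t x)"

definition profit1 :: "(real \<Rightarrow> real) \<Rightarrow> (real \<Rightarrow> real) \<Rightarrow> real \<times> real \<Rightarrow> real" where
  "profit1 l1 l2 t = fst t * fst (eq_flow l1 l2 t)"

definition profit2 :: "(real \<Rightarrow> real) \<Rightarrow> (real \<Rightarrow> real) \<Rightarrow> real \<times> real \<Rightarrow> real" where
  "profit2 l1 l2 t = snd t * snd (eq_flow l1 l2 t)"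

text \<open>T(infinity): Nash equilibria of the pricing game with unbounded tolls.\<close>
definition toll_NE :: "(real \<Rightarrow> real) \<Rightarrow> (real \<Rightarrow> real) \<Rightarrow> real \<times> real \<Rightarrow> bool" where
  "toll_NE l1 l2 t \<longleftrightarrow> fst t \<ge> 0 \<and> snd t \<ge> 0 \<and>
     (\<forall>t1'\<ge>0. profit1 l1 l2 t \<ge> profit1 l1 l2 (t1', snd t)) \<and>
     (\<forall>t2'\<ge>0. profit2 l1 l2 t \<ge> profit2 l1 l2 (fst t, t2'))"

definition mu2 :: "(real \<Rightarrow> real) \<Rightarrow> real" where
  "mu2 l = Sup {(l x - l xs) * (xs + 1 - 2 * x) / l x | x xs. x \<ge> 1/2 \<and> 0 \<le> xs \<and> xs \<le> x}"

definition mu2_class :: "(real \<Rightarrow> real) set \<Rightarrow> real" where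
  "mu2_class L = Sup (mu2 ` L)"

end

theory Submission imports Defs begin

lemma slope_mono:
  fixes f :: "real \<Rightarrow> real"
  assumes f: "convex_on {0..} f" and "0 \<le> x" "x < t" "t < y"
  shows "(f t - f x)/(t - x) \<le> (f y - f x)/(y - x)"
    and "(f y - f x)/(y - x) \<le> (f y - f t)/(y - t)"
proof -
  have I: "x \<in> {0..}" "y \<in> {0..}" using assms by auto
  note c = convex_on_slope_le[OF f I, of t]
  have e1: "(f x - f t)/(x - t) = (f t - f x)/(t - x)" by (metis minus_diff_eq minus_divide_divide)
  have e2: "(f x - f y)/(x - y) = (f y - f x)/(y - x)" by (metis minus_diff_eq minus_divide_divide)
  have e3: "(f t - f y)/(t - y) = (f y - f t)/(y - t)" by (metis minus_diff_eq minus_divide_divide)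
  show "(f t - f x)/(t - x) \<le> (f y - f x)/(y - x)" using c(1) assms e1 e2 by simp
  show "(f y - f x)/(y - x) \<le> (f y - f t)/(y - t)" using c(2) assms e2 e3 by simp
qed

lemma core:
  fixes l1 l2 :: "real \<Rightarrow> real" and a b t1 t2 mu :: real
  assumes sm1: "strict_mono_on {0..} l1" and sm2: "strict_mono_on {0..} l2"
    and cv1: "convex_on {0..} l1" and cv2: "convex_on {0..} l2"
    and a: "0 < a" "a < 1" "1/2 \<le> a" and b: "0 \<le> b" "b < a"
    and t: "t1 \<ge> 0" "t2 \<ge> 0" and eq: "l1 a + t1 = l2 (1-a) + t2"
    and P1: "\<And>t' c. t' \<ge> 0 \<Longrightarrow> 0 < c \<Longrightarrow> c < 1 \<Longrightarrow> l1 c + t' = l2 (1-c) + t2 \<Longrightarrow> t' * c \<le> t1 * a"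
    and P2: "\<And>t' c. t' \<ge> 0 \<Longrightarrow> 0 < c \<Longrightarrow> c < 1 \<Longrightarrow> l1 c + t1 = l2 (1-c) + t' \<Longrightarrow> t' * (1-c) \<le> t2 * (1-a)"
    and mu: "(l1 a - l1 b) * (b + 1 - 2*a) \<le> mu * l1 a" "0 \<le> mu" "mu \<le> 1/2"
  shows "l1 a * a + l2 (1-a) * (1-a) \<le> 1/(1-mu) * (l1 b * b + l2 (1-b) * (1-b))"
proof -
  define s where "s = (l1 a - l1 b)/(a-b)"
  define K where "K = (l1 1 - l1 a)/(1-a) + (l2 (1-b) - l2 (1-a))/(a-b)"
  have l1ba: "l1 b < l1 a" using sm1 a b by (auto simp: strict_mono_on_def)
  have s0: "s \<ge> 0" using l1ba b unfolding s_def by simp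
  have key: "t1 - t2 \<ge> (2*a-1)* s - 2*h*K" if h: "0 < h" "h < a - b" for h
  proof -
    define c where "c = a - h"
    have c: "b < c" "c < a" "0 < c" "c < 1" using h a b unfolding c_def by auto
    define \<delta> where "\<delta> = l1 a - l1 c + l2 (1-c) - l2 (1-a)"
    have l1ca: "l1 c < l1 a" using sm1 c by (auto simp: strict_mono_on_def)
    have l2ca: "l2 (1-a) < l2 (1-c)" using sm2 c a by (auto simp: strict_mono_on_def)
    have d0: "\<delta> > 0" using l1ca l2ca unfolding \<delta>_def by simp
    have "(t1+\<delta>)*c \<le> t1*a" using P1[of "t1+\<delta>" c] c t d0 eq unfolding \<delta>_def by auto
    hence i1: "\<delta> * c \<le> t1 * h" unfolding c_def by (simp add: algebra_simps)
    have i2: "t2 * h \<le> \<delta> * (1-c)"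
    proof (cases "\<delta> \<le> t2")
      case True
      have "(t2-\<delta>)*(1-c) \<le> t2*(1-a)" using P2[of "t2-\<delta>" c] c True eq unfolding \<delta>_def by auto
      thus ?thesis unfolding c_def by (simp add: algebra_simps)
    next
      case False
      have "t2 * h \<le> \<delta> * h" using False h by (intro mult_right_mono) auto
      also have "\<dots> \<le> \<delta> * (1-c)" using d0 a unfolding c_def by (intro mult_left_mono) auto
      finally show ?thesis .
    qed
    have i3: "(t1 - t2) * h \<ge> \<delta> * (2*c - 1)" using i1 i2 by (simp add: algebra_simps)
    define D where "D = \<delta> / h"
    have "t1 - t2 \<ge> (2*c-1) * D" using i3 h unfolding D_def by (simp add: field_simps)
    have sl1: "s \<le> (l1 a - l1 c)/(a - c)" unfolding s_def using slope_mono(2)[OF cv1 b(1) c(1) c(2)] .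
    have "(l1 a - l1 c)/(a - c) \<le> D" using l2ca h unfolding D_def \<delta>_def c_def
      by (simp add: divide_right_mono)
    hence sD: "s \<le> D" using sl1 by simp
    have k1: "(l1 a - l1 c)/(a - c) \<le> (l1 1 - l1 a)/(1-a)"
      using slope_mono[OF cv1 _ c(2) a(2)] c by (meson order_trans less_imp_le)
    have k2: "(l2 (1-c) - l2 (1-a))/((1-c) - (1-a)) \<le> (l2 (1-b) - l2 (1-a))/((1-b) - (1-a))"
      using slope_mono(1)[OF cv2 _ _ , of "1-a" "1-c" "1-b"] a c by auto
    have "D = (l1 a - l1 c)/(a - c) + (l2 (1-c) - l2 (1-a))/((1-c) - (1-a))"
      using h unfolding D_def \<delta>_def c_def by (simp add: diff_divide_distrib add_divide_distrib)
    hence DK: "D \<le> K" using k1 k2 unfolding K_def by simp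
    have "(2*a-1)* s \<le> (2*a-1)*D" using sD a by (intro mult_left_mono) auto
    moreover have "h*D \<le> h*K" using DK h by (intro mult_left_mono) auto
    moreover have "(2*c-1)*D = (2*a-1)*D - 2*h*D" unfolding c_def by (simp add: algebra_simps)
    ultimately show ?thesis using \<open>t1 - t2 \<ge> (2*c-1) * D\<close> by linarith
  qed
  have T: "(2*a-1)* s \<le> t1 - t2"
  proof (rule field_le_epsilon)
    fix e :: real assume e: "0 < e"
    define h where "h = min ((a-b)/2) (e/(2*(\<bar>K\<bar>+1)))"
    have "e/(2*(\<bar>K\<bar>+1)) > 0" using e by simp
    hence h1: "0 < h" using b unfolding h_def by auto
    have "h \<le> (a-b)/2" unfolding h_def by (rule min.cobounded1)
    hence h: "0 < h" "h < a - b" using h1 b by auto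
    have "h \<le> e/(2*(\<bar>K\<bar>+1))" unfolding h_def by (rule min.cobounded2)
    hence "h * (2*(\<bar>K\<bar>+1)) \<le> e" by (simp add: field_simps)
    moreover have "h * K \<le> h * (\<bar>K\<bar>+1)" using h(1) by (intro mult_left_mono) auto
    ultimately have "2*h*K \<le> e" by linarith
    thus "(2*a-1)* s \<le> t1 - t2 + e" using key[OF h] by linarith
  qed
  have sab: "s * (a - b) = l1 a - l1 b" unfolding s_def using b by simp
  have L2: "l2 (1-a) \<ge> l1 a + (2*a-1)* s" using T eq by linarith
  have "(2*a-1)* s \<ge> 0" using s0 a by simp
  hence L2b: "l2 (1-a) \<ge> l1 a" using L2 by linarith
  define C where "C = l1 a * a + l2 (1-a) * (1-a)"
  define Cs where "Cs = l1 b * b + l2 (1-b) * (1-b)"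
  have l2ab: "l2 (1-a) \<le> l2 (1-b)" using sm2 a b by (auto simp: strict_mono_on_def less_imp_le)
  have "Cs \<ge> l1 b * b + l2 (1-a) * (1-b)" unfolding Cs_def using l2ab b a
    by (simp add: mult_right_mono)
  moreover have "l2 (1-a) * (a-b) \<ge> (l1 a + (2*a-1)* s) * (a-b)" using L2 b by (simp add: mult_right_mono)
  moreover have "(l1 a + (2*a-1)* s) * (a-b) = l1 a * (a-b) + (2*a-1)*(l1 a - l1 b)"
  proof -
    have "(l1 a + (2*a-1)* s) * (a-b) = l1 a * (a-b) + (2*a-1)*(s * (a-b))" by (simp add: algebra_simps)
    thus ?thesis using sab by simp
  qed
  ultimately have "C - Cs \<le> (l1 a - l1 b) * (b + 1 - 2*a)" unfolding C_def
    by (simp add: algebra_simps)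
  also have "\<dots> \<le> mu * l1 a" by (rule mu(1))
  also have "\<dots> \<le> mu * C"
  proof -
    have "l1 a = l1 a * a + l1 a * (1-a)" by (simp add: algebra_simps)
    also have "\<dots> \<le> C" unfolding C_def using L2b a by (simp add: mult_right_mono)
    finally show ?thesis using mu(2) by (simp add: mult_left_mono)
  qed
  finally have "C * (1 - mu) \<le> Cs" by (simp add: algebra_simps)
  hence "C \<le> Cs / (1 - mu)" using mu by (simp add: field_simps)
  thus ?thesis unfolding C_def Cs_def by simp
qed


lemma lat_props:
  assumes "latency_c l"
  shows "strict_mono_on {0..} l" "convex_on {0..} l" "continuous_on {0..} l" "\<And>x. x \<ge> 0 \<Longrightarrow> l x \<ge> 0"
proof -
  show "strict_mono_on {0..} l" "convex_on {0..} l" "\<And>x. x \<ge> 0 \<Longrightarrow> l x \<ge> 0"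
    using assms unfolding latency_c_def by auto
  from assms obtain l' where d: "\<forall>x\<ge>0. (l has_real_derivative l' x) (at x within {0..})"
    unfolding latency_c_def by blast
  show "continuous_on {0..} l" unfolding continuous_on_eq_continuous_within
  proof
    fix x :: real assume "x \<in> {0..}"
    hence "(l has_real_derivative l' x) (at x within {0..})" using d by auto
    thus "continuous (at x within {0..}) l" by (rule DERIV_continuous)
  qed
qed

lemma lat_pos:
  assumes "latency_c l" "x > 0" shows "l x > 0"
proof -
  have "l 0 < l x" using lat_props(1)[OF assms(1)] assms(2) by (auto simp: strict_mono_on_def)
  thus ?thesis using lat_props(4)[OF assms(1), of 0] by simp
qed

lemma mu2_elem_le:
  assumes "latency_c l" "x \<ge> 1/2" "0 \<le> xs" "xs \<le> x"
  shows "(l x - l xs) * (xs + 1 - 2 * x) / l x \<le> 1/2"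
proof -
  have lx: "l x > 0" using lat_pos assms by auto
  have lxs: "l xs \<le> l x" "l xs \<ge> 0" using lat_props(1,4)[OF assms(1)] assms
    by (auto simp: strict_mono_on_def le_less)
  have "(l x - l xs) * (xs + 1 - 2 * x) \<le> l x / 2"
  proof (cases "xs + 1 - 2 * x \<ge> 0")
    case True
    have "(l x - l xs) * (xs + 1 - 2 * x) \<le> l x * (xs + 1 - 2 * x)"
      using True lxs by (intro mult_right_mono) auto
    also have "\<dots> \<le> l x * (1/2)" using lx assms by (intro mult_left_mono) auto
    finally show ?thesis by simp
  next
    case False
    hence "(l x - l xs) * (xs + 1 - 2 * x) \<le> 0" using lxs
      by (intro mult_nonneg_nonpos) auto
    thus ?thesis using lx by simp
  qed
  thus ?thesis using lx by (simp add: divide_le_eq)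
qed

lemma mu2_props:
  assumes "latency_c l"
  shows "bdd_above {(l x - l xs) * (xs + 1 - 2 * x) / l x | x xs. x \<ge> 1/2 \<and> 0 \<le> xs \<and> xs \<le> x}"
    and "mu2 l \<le> 1/2" and "0 \<le> mu2 l"
    and "\<And>x xs. x \<ge> 1/2 \<Longrightarrow> 0 \<le> xs \<Longrightarrow> xs \<le> x \<Longrightarrow> (l x - l xs) * (xs + 1 - 2 * x) / l x \<le> mu2 l"
proof -
  let ?S = "{(l x - l xs) * (xs + 1 - 2 * x) / l x | x xs. x \<ge> 1/2 \<and> 0 \<le> xs \<and> xs \<le> x}"
  have ub: "\<And>y. y \<in> ?S \<Longrightarrow> y \<le> 1/2" using mu2_elem_le[OF assms] by auto
  show bdd: "bdd_above ?S" using ub by (intro bdd_aboveI[of _ "1/2"]) blast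
  have ne: "?S \<noteq> {}" by (rule ccontr) (auto dest!: spec[of _ "1/2"])
  show "mu2 l \<le> 1/2" unfolding mu2_def using ne ub by (intro cSup_least) auto
  show el: "\<And>x xs. x \<ge> 1/2 \<Longrightarrow> 0 \<le> xs \<Longrightarrow> xs \<le> x \<Longrightarrow> (l x - l xs) * (xs + 1 - 2 * x) / l x \<le> mu2 l"
    unfolding mu2_def using bdd by (intro cSup_upper) auto
  show "0 \<le> mu2 l" using el[of "1/2" "1/2"] by simp
qed

lemma mu2_class_props:
  assumes "\<forall>l\<in>L. latency_c l" "l \<in> L"
  shows "mu2 l \<le> mu2_class L" "mu2_class L \<le> 1/2"
proof -
  have ub: "\<And>y. y \<in> mu2 ` L \<Longrightarrow> y \<le> 1/2" using mu2_props(2) assms(1) by auto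
  show "mu2 l \<le> mu2_class L" unfolding mu2_class_def using ub assms(2)
    by (intro cSup_upper bdd_aboveI[of _ "1/2"]) auto
  show "mu2_class L \<le> 1/2" unfolding mu2_class_def using ub assms(2)
    by (intro cSup_least) auto
qed

lemma wardrop_unique:
  assumes sm1: "strict_mono_on {0..} l1" and sm2: "strict_mono_on {0..} l2"
    and w: "wardrop l1 l2 t x" "wardrop l1 l2 t y"
  shows "x = y"
proof -
  have g: "\<And>p q. 0 \<le> p \<Longrightarrow> p < q \<Longrightarrow> q \<le> 1 \<Longrightarrow>
      l1 p + fst t - l2 (1-p) - snd t < l1 q + fst t - l2 (1-q) - snd t"
  proof -
    fix p q :: real assume pq: "0 \<le> p" "p < q" "q \<le> 1"
    have "l1 p < l1 q" using sm1 pq by (auto simp: strict_mono_on_def)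
    moreover have "l2 (1-q) < l2 (1-p)" using sm2 pq by (auto simp: strict_mono_on_def)
    ultimately show "l1 p + fst t - l2 (1-p) - snd t < l1 q + fst t - l2 (1-q) - snd t" by simp
  qed
  have x: "snd x = 1 - fst x" "0 \<le> fst x" "fst x \<le> 1" and y: "snd y = 1 - fst y" "0 \<le> fst y" "fst y \<le> 1"
    using w unfolding wardrop_def is_flow_def by auto
  have "\<not> fst x < fst y" if w1: "wardrop l1 l2 t x" "wardrop l1 l2 t y"
      and x: "snd x = 1 - fst x" "0 \<le> fst x" "fst x \<le> 1" and y: "snd y = 1 - fst y" "0 \<le> fst y" "fst y \<le> 1" for x y
  proof
    assume lt: "fst x < fst y"
    have "l1 (fst y) + fst t \<le> l2 (snd y) + snd t" using w1(2) lt x unfolding wardrop_def by auto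
    moreover have "l2 (snd x) + snd t \<le> l1 (fst x) + fst t" using w1(1) lt y x unfolding wardrop_def by auto
    ultimately show False using g[OF x(2) lt y(3)] x y by simp
  qed
  from this[OF w x y] this[OF w(2) w(1) y x] have "fst x = fst y" by simp
  thus ?thesis using x y by (simp add: prod_eq_iff)
qed

lemma wardrop_exists:
  assumes sm1: "strict_mono_on {0..} l1" and sm2: "strict_mono_on {0..} l2"
    and c1: "continuous_on {0..} l1" and c2: "continuous_on {0..} l2"
  shows "\<exists>x. wardrop l1 l2 t x"
proof -
  define g where "g p = l1 p + fst t - l2 (1-p) - snd t" for p
  have cg: "continuous_on {0..1} g" unfolding g_def
    by (intro continuous_intros continuous_on_compose2[OF c1] continuous_on_compose2[OF c2]) auto
  show ?thesis
  proof (cases "g 0 \<ge> 0")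
    case True
    hence "wardrop l1 l2 t (0,1)" unfolding wardrop_def is_flow_def g_def by auto
    thus ?thesis by blast
  next
    case F0: False
    show ?thesis
    proof (cases "g 1 \<le> 0")
      case True
      hence "wardrop l1 l2 t (1,0)" unfolding wardrop_def is_flow_def g_def by auto
      thus ?thesis by blast
    next
      case False
      then obtain p where p: "0 \<le> p" "p \<le> 1" "g p = 0" using IVT'[of g 0 0 1] F0 cg by auto
      hence "wardrop l1 l2 t (p,1-p)" unfolding wardrop_def is_flow_def g_def by auto
      thus ?thesis by blast
    qed
  qed
qed

lemma eq_flow_props:
  assumes "latency_c l1" "latency_c l2"
  shows "wardrop l1 l2 t (eq_flow l1 l2 t)"
    and "wardrop l1 l2 t x \<Longrightarrow> eq_flow l1 l2 t = x"
proof -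
  note p1 = lat_props[OF assms(1)] and p2 = lat_props[OF assms(2)]
  obtain x0 where x0: "wardrop l1 l2 t x0" using wardrop_exists[OF p1(1) p2(1) p1(3) p2(3)] by blast
  have ex1: "\<exists>!x. wardrop l1 l2 t x"
  proof (rule ex1I[of _ x0])
    show "wardrop l1 l2 t x0" by (rule x0)
    fix y assume "wardrop l1 l2 t y" thus "y = x0" by (rule wardrop_unique[OF p1(1) p2(1) _ x0])
  qed
  show "wardrop l1 l2 t (eq_flow l1 l2 t)" unfolding eq_flow_def using theI'[OF ex1] .
  show "wardrop l1 l2 t x \<Longrightarrow> eq_flow l1 l2 t = x" unfolding eq_flow_def by (rule the1_equality[OF ex1])
qed


theorem mainTheorem11:
  fixes L :: "(real \<Rightarrow> real) set"
    and l1 l2 :: "real \<Rightarrow> real"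
    and xs t :: "real \<times> real"
  assumes L_sub: "\<forall>l\<in>L. latency_c l"
    and l1L: "l1 \<in> L" and l2L: "l2 \<in> L"
    and opt: "optimal_flow l1 l2 xs"
    and NE: "toll_NE l1 l2 t"
    and pos1: "fst (eq_flow l1 l2 t) > 0"
    and pos2: "snd (eq_flow l1 l2 t) > 0"
    and link: "(fst (eq_flow l1 l2 t) > fst xs \<and> fst (eq_flow l1 l2 t) \<ge> 1/2) \<or>
               (snd (eq_flow l1 l2 t) > snd xs \<and> snd (eq_flow l1 l2 t) \<ge> 1/2)"
  shows "cost l1 l2 (eq_flow l1 l2 t) \<le> 1 / (1 - mu2_class L) * cost l1 l2 xs"
proof -
  have lc1: "latency_c l1" and lc2: "latency_c l2" using L_sub l1L l2L by auto
  note p1 = lat_props[OF lc1] and p2 = lat_props[OF lc2]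
  define x where "x = eq_flow l1 l2 t"
  define a where "a = fst x"
  define b where "b = fst xs"
  obtain t1 t2 where tt: "t = (t1, t2)" by (cases t)
  have w: "wardrop l1 l2 t x" unfolding x_def by (rule eq_flow_props(1)[OF lc1 lc2])
  have xa: "x = (a, 1-a)" "0 < a" "a < 1" using w pos1 pos2 unfolding x_def[symmetric] a_def wardrop_def is_flow_def
    by (auto simp: prod_eq_iff)
  have xb: "xs = (b, 1-b)" "0 \<le> b" "b \<le> 1" using opt unfolding b_def optimal_flow_def is_flow_def
    by (auto simp: prod_eq_iff)
  have eq: "l1 a + t1 = l2 (1-a) + t2" using w xa tt unfolding wardrop_def by auto
  have t0: "t1 \<ge> 0" "t2 \<ge> 0" using NE tt unfolding toll_NE_def by auto
  have NE1: "t' * c \<le> t1 * a" if "t' \<ge> 0" "0 < c" "c < 1" "l1 c + t' = l2 (1-c) + t2" for t' c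
  proof -
    have "wardrop l1 l2 (t', t2) (c, 1-c)" using that unfolding wardrop_def is_flow_def by auto
    hence "eq_flow l1 l2 (t', t2) = (c, 1-c)" by (rule eq_flow_props(2)[OF lc1 lc2])
    moreover have "profit1 l1 l2 t \<ge> profit1 l1 l2 (t', snd t)" using NE that unfolding toll_NE_def by auto
    ultimately show ?thesis using xa tt unfolding profit1_def x_def by (simp add: mult.commute)
  qed
  have NE2: "t' * (1-c) \<le> t2 * (1-a)" if "t' \<ge> 0" "0 < c" "c < 1" "l1 c + t1 = l2 (1-c) + t'" for t' c
  proof -
    have "wardrop l1 l2 (t1, t') (c, 1-c)" using that unfolding wardrop_def is_flow_def by auto
    hence "eq_flow l1 l2 (t1, t') = (c, 1-c)" by (rule eq_flow_props(2)[OF lc1 lc2])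
    moreover have "profit2 l1 l2 t \<ge> profit2 l1 l2 (fst t, t')" using NE that unfolding toll_NE_def by auto
    ultimately show ?thesis using xa tt unfolding profit2_def x_def by (simp add: mult.commute)
  qed
  define M where "M = mu2_class L"
  have M: "mu2 l1 \<le> M" "mu2 l2 \<le> M" "M \<le> 1/2" "0 \<le> M"
    using mu2_class_props[OF L_sub l1L] mu2_class_props[OF L_sub l2L] mu2_props(3)[OF lc1]
    unfolding M_def by auto
  have cx: "cost l1 l2 x = l1 a * a + l2 (1-a) * (1-a)" using xa unfolding cost_def by simp
  have cxs: "cost l1 l2 xs = l1 b * b + l2 (1-b) * (1-b)" using xb unfolding cost_def by simp
  have link': "(fst x > fst xs \<and> fst x \<ge> 1/2) \<or> (snd x > snd xs \<and> snd x \<ge> 1/2)"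
    using link unfolding x_def .
  have "l1 a * a + l2 (1-a) * (1-a) \<le> 1/(1-M) * (l1 b * b + l2 (1-b) * (1-b))"
  using link' proof
    assume h: "fst x > fst xs \<and> fst x \<ge> 1/2"
    hence ab: "b < a" "1/2 \<le> a" using xa xb by auto
    have la: "l1 a > 0" using lat_pos[OF lc1] xa by auto
    have "(l1 a - l1 b) * (b + 1 - 2*a) / l1 a \<le> M"
      using mu2_props(4)[OF lc1 ab(2) xb(2)] ab M by force
    hence mu: "(l1 a - l1 b) * (b + 1 - 2*a) \<le> M * l1 a" using la by (simp add: divide_le_eq)
    show ?thesis
      by (rule core[OF p1(1) p2(1) p1(2) p2(2) xa(2) xa(3) ab(2) xb(2) ab(1) t0 eq NE1 NE2 mu M(4) M(3)])
  next
    assume h: "snd x > snd xs \<and> snd x \<ge> 1/2"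
    define a' where "a' = 1 - a"
    define b' where "b' = 1 - b"
    have ab: "b' < a'" "1/2 \<le> a'" "0 \<le> b'" "0 < a'" "a' < 1" using h xa xb unfolding a'_def b'_def by auto
    have la: "l2 a' > 0" using lat_pos[OF lc2] ab by auto
    have "(l2 a' - l2 b') * (b' + 1 - 2*a') / l2 a' \<le> M"
      using mu2_props(4)[OF lc2 ab(2) ab(3)] ab M by force
    hence mu: "(l2 a' - l2 b') * (b' + 1 - 2*a') \<le> M * l2 a'" using la by (simp add: divide_le_eq)
    have eq': "l2 a' + t2 = l1 (1-a') + t1" using eq unfolding a'_def by simp
    have P1: "t' * c \<le> t2 * a'" if "t' \<ge> 0" "0 < c" "c < 1" "l2 c + t' = l1 (1-c) + t1" for t' c
      using NE2[of t' "1-c"] that unfolding a'_def by simp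
    have P2: "t' * (1-c) \<le> t1 * (1-a')" if "t' \<ge> 0" "0 < c" "c < 1" "l2 c + t2 = l1 (1-c) + t'" for t' c
      using NE1[of t' "1-c"] that unfolding a'_def by simp
    have "l2 a' * a' + l1 (1-a') * (1-a') \<le> 1/(1-M) * (l2 b' * b' + l1 (1-b') * (1-b'))"
      by (rule core[OF p2(1) p1(1) p2(2) p1(2) ab(4) ab(5) ab(2) ab(3) ab(1) t0(2) t0(1) eq' P1 P2 mu M(4) M(3)])
    thus ?thesis unfolding a'_def b'_def by (simp add: algebra_simps)
  qed
  thus ?thesis using cx cxs unfolding x_def M_def by simp
qed

end
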